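(* Let $\Omega\subset\mathbb{R}^d$, $d\in\{1,2,3\}$, be a bounded Lipschitz domain and $C\in H^1(\Omega)$. For every $\lambda\ge0$ the functional $\bar b_\lambda$ is strictly convex.
   Context: $\|\cdot\|_q$ denotes the $L^q(\Omega)$ norm. Write $C^+=\max\{C,0\}$, $C^-=\min\{C,0\}$, fix $\delta>0$ and set $N=\delta^2+\int_\Omega C^+dx$, $P=\delta^2-\int_\Omega C^-dx$. Let $\mathcal P=\{v\in L^1(\Omega):\int_\Omega v\,dx=0\}$, $b(v)=N\ln\big(\tfrac1{|\Omega|}\int_\Omega e^{-v}dx\big)+P\ln\big(\tfrac1{|\Omega|}\int_\Omega e^{v}dx\big)+\int_\Omega Cv\,dx$, $\Sigma=\{v\in\mathcal P: b(v)<+\infty,\ \nabla v\in L^2(\Omega)\}$. For $\lambda\ge0$, $\bar b_\lambda:L^1(\Omega)\to\mathbb{R}\cup\{+\infty\}$ is $\bar b_\lambda(v)=\lambda^2\|\nabla v\|_2^2+b(v)$ if $v\in\Sigma$ and $+\infty$ otherwise. *)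

theory Defs
  imports "HOL-Analysis.Analysis"
begin

text \<open>Coordinate-free: a unit direction e, and a Lipschitz function gamma on the
hyperplane orthogonal to e (the variable y - (y.e) e ranges over that hyperplane).\<close>

definition lipschitz_domain :: "(real ^ 'n) set \<Rightarrow> bool" where
  "lipschitz_domain \<Omega> \<longleftrightarrow>
     \<Omega> \<noteq> {} \<and> open \<Omega> \<and> connected \<Omega> \<and> bounded \<Omega> \<and>
     (\<forall>x \<in> frontier \<Omega>. \<exists>r > 0. \<exists>e :: real ^ 'n. \<exists>\<gamma> :: real ^ 'n \<Rightarrow> real. \<exists>L.
        norm e = 1 \<and> L-lipschitz_on {z. z \<bullet> e = 0} \<gamma> \<and>
        \<Omega> \<inter> ball x r = {y \<in> ball x r. y \<bullet> e > \<gamma> (y - (y \<bullet> e) *\<^sub>R e)})"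

definition partial_deriv :: "(real ^ 'n \<Rightarrow> real) \<Rightarrow> 'n \<Rightarrow> real ^ 'n \<Rightarrow> real" where
  "partial_deriv f i x = frechet_derivative f (at x) (axis i 1)"

text \<open>C-infinity functions on the whole space: differentiable, with all partial
derivatives again C-infinity (greatest fixed point, i.e. derivatives of all orders).\<close>

coinductive smooth_fun :: "(real ^ 'n \<Rightarrow> real) \<Rightarrow> bool" where
  "\<lbrakk> f differentiable_on UNIV; \<And>i. smooth_fun (partial_deriv f i) \<rbrakk> \<Longrightarrow> smooth_fun f"

definition test_function :: "(real ^ 'n) set \<Rightarrow> (real ^ 'n \<Rightarrow> real) \<Rightarrow> bool" where
  "test_function \<Omega> \<phi> \<longleftrightarrow> smooth_fun \<phi> \<and> compact (closure {x. \<phi> x \<noteq> 0})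
      \<and> closure {x. \<phi> x \<noteq> 0} \<subseteq> \<Omega>"

definition locally_integrable_on :: "(real ^ 'n) set \<Rightarrow> (real ^ 'n \<Rightarrow> real) \<Rightarrow> bool" where
  "locally_integrable_on \<Omega> f \<longleftrightarrow> (\<forall>K. compact K \<and> K \<subseteq> \<Omega> \<longrightarrow> integrable (lebesgue_on K) f)"

definition weak_gradient :: "(real ^ 'n) set \<Rightarrow> (real ^ 'n \<Rightarrow> real) \<Rightarrow> (real ^ 'n \<Rightarrow> real ^ 'n) \<Rightarrow> bool" where
  "weak_gradient \<Omega> v g \<longleftrightarrow> locally_integrable_on \<Omega> v \<and>
     (\<forall>i. locally_integrable_on \<Omega> (\<lambda>x. g x $ i)) \<and>
     (\<forall>\<phi> i. test_function \<Omega> \<phi> \<longrightarrow>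
        (\<integral>x. v x * partial_deriv \<phi> i x \<partial>lebesgue_on \<Omega>) = - (\<integral>x. g x $ i * \<phi> x \<partial>lebesgue_on \<Omega>))"

definition in_L1 :: "(real ^ 'n) set \<Rightarrow> (real ^ 'n \<Rightarrow> real) \<Rightarrow> bool" where
  "in_L1 \<Omega> f \<longleftrightarrow> integrable (lebesgue_on \<Omega>) f"

definition in_L2 :: "(real ^ 'n) set \<Rightarrow> (real ^ 'n \<Rightarrow> real) \<Rightarrow> bool" where
  "in_L2 \<Omega> f \<longleftrightarrow> f \<in> borel_measurable (lebesgue_on \<Omega>) \<and> integrable (lebesgue_on \<Omega>) (\<lambda>x. (f x)\<^sup>2)"

definition grad_in_L2 :: "(real ^ 'n) set \<Rightarrow> (real ^ 'n \<Rightarrow> real) \<Rightarrow> bool" where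
  "grad_in_L2 \<Omega> v \<longleftrightarrow> (\<exists>g. weak_gradient \<Omega> v g \<and> g \<in> borel_measurable (lebesgue_on \<Omega>)
      \<and> integrable (lebesgue_on \<Omega>) (\<lambda>x. (norm (g x))\<^sup>2))"

text \<open>Squared L^2 norm of the weak gradient (weak gradients are unique a.e.).\<close>
definition grad_norm2_sq :: "(real ^ 'n) set \<Rightarrow> (real ^ 'n \<Rightarrow> real) \<Rightarrow> real" where
  "grad_norm2_sq \<Omega> v = (\<integral>x. (norm ((SOME g. weak_gradient \<Omega> v g \<and> g \<in> borel_measurable (lebesgue_on \<Omega>)
      \<and> integrable (lebesgue_on \<Omega>) (\<lambda>x. (norm (g x))\<^sup>2)) x))\<^sup>2 \<partial>lebesgue_on \<Omega>)"

definition in_H1 :: "(real ^ 'n) set \<Rightarrow> (real ^ 'n \<Rightarrow> real) \<Rightarrow> bool" where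
  "in_H1 \<Omega> f \<longleftrightarrow> in_L2 \<Omega> f \<and> grad_in_L2 \<Omega> f"

definition Nconst :: "(real ^ 'n) set \<Rightarrow> (real ^ 'n \<Rightarrow> real) \<Rightarrow> real \<Rightarrow> real" where
  "Nconst \<Omega> C \<delta> = \<delta>\<^sup>2 + (\<integral>x. max (C x) 0 \<partial>lebesgue_on \<Omega>)"

definition Pconst :: "(real ^ 'n) set \<Rightarrow> (real ^ 'n \<Rightarrow> real) \<Rightarrow> real \<Rightarrow> real" where
  "Pconst \<Omega> C \<delta> = \<delta>\<^sup>2 - (\<integral>x. min (C x) 0 \<partial>lebesgue_on \<Omega>)"

text \<open>b(v), with value +infinity when one of the integrals in its definition is infinite
(ln of an infinite integral of exp(+-v)) or undefined.\<close>
definition bfun :: "(real ^ 'n) set \<Rightarrow> (real ^ 'n \<Rightarrow> real) \<Rightarrow> real \<Rightarrow> (real ^ 'n \<Rightarrow> real) \<Rightarrow> ereal" where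
  "bfun \<Omega> C \<delta> v =
     (if integrable (lebesgue_on \<Omega>) (\<lambda>x. exp (- v x)) \<and> integrable (lebesgue_on \<Omega>) (\<lambda>x. exp (v x))
         \<and> integrable (lebesgue_on \<Omega>) (\<lambda>x. C x * v x)
      then ereal (Nconst \<Omega> C \<delta> * ln ((\<integral>x. exp (- v x) \<partial>lebesgue_on \<Omega>) / measure lebesgue \<Omega>)
                + Pconst \<Omega> C \<delta> * ln ((\<integral>x. exp (v x) \<partial>lebesgue_on \<Omega>) / measure lebesgue \<Omega>)
                + (\<integral>x. C x * v x \<partial>lebesgue_on \<Omega>))
      else \<infinity>)"

definition Sigma_set :: "(real ^ 'n) set \<Rightarrow> (real ^ 'n \<Rightarrow> real) \<Rightarrow> real \<Rightarrow> (real ^ 'n \<Rightarrow> real) set" where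
  "Sigma_set \<Omega> C \<delta> = {v. in_L1 \<Omega> v \<and> (\<integral>x. v x \<partial>lebesgue_on \<Omega>) = 0
       \<and> bfun \<Omega> C \<delta> v < \<infinity> \<and> grad_in_L2 \<Omega> v}"

definition bbar :: "(real ^ 'n) set \<Rightarrow> (real ^ 'n \<Rightarrow> real) \<Rightarrow> real \<Rightarrow> real \<Rightarrow> (real ^ 'n \<Rightarrow> real) \<Rightarrow> ereal" where
  "bbar \<Omega> C \<delta> lam v =
     (if v \<in> Sigma_set \<Omega> C \<delta> then ereal (lam\<^sup>2 * grad_norm2_sq \<Omega> v) + bfun \<Omega> C \<delta> v else \<infinity>)"

text \<open>Elements of L^1 are represented by integrable functions; two representatives are the
same element iff they agree a.e. on Omega.\<close>
definition strictly_convex_L1 :: "(real ^ 'n) set \<Rightarrow> ((real ^ 'n \<Rightarrow> real) \<Rightarrow> ereal) \<Rightarrow> bool" where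
  "strictly_convex_L1 \<Omega> F \<longleftrightarrow>
     (\<forall>u v t. in_L1 \<Omega> u \<and> in_L1 \<Omega> v \<and> 0 < t \<and> t < 1 \<longrightarrow>
        F (\<lambda>x. t * u x + (1 - t) * v x) \<le> ereal t * F u + ereal (1 - t) * F v) \<and>
     (\<forall>u v t. in_L1 \<Omega> u \<and> in_L1 \<Omega> v \<and> 0 < t \<and> t < 1 \<and>
        \<not> (AE x in lebesgue_on \<Omega>. u x = v x) \<and> F u < \<infinity> \<and> F v < \<infinity> \<longrightarrow>
        F (\<lambda>x. t * u x + (1 - t) * v x) < ereal t * F u + ereal (1 - t) * F v)"

end

theory Submission
  imports Defs "HOL-Computational_Algebra.Polynomial"
begin



definition G :: "real poly \<Rightarrow> real \<Rightarrow> real" where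
  "G p x = (if x > 0 then poly p (1/x) * exp (-1/x) else 0)"

definition Gd :: "real poly \<Rightarrow> real poly" where
  "Gd p = [:0,0,1:] * (p - pderiv p)"

lemma poly_exp_lim: "((\<lambda>y. poly (q::real poly) y * exp (- y)) \<longlongrightarrow> 0) at_top"
proof -
  have "((\<lambda>y. \<Sum>i\<le>degree q. coeff q i * (y ^ i / exp y)) \<longlongrightarrow> (\<Sum>i\<le>degree q. coeff q i * 0)) at_top"
    by (intro tendsto_sum tendsto_mult tendsto_const tendsto_power_div_exp_0)
  moreover have "(\<Sum>i\<le>degree q. coeff q i * (y ^ i / exp y)) = poly q y * exp (- y)" for y
  proof -
    have "(\<Sum>i\<le>degree q. coeff q i * (y ^ i / exp y)) = (\<Sum>i\<le>degree q. coeff q i * y ^ i) / exp y"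
      by (simp add: sum_divide_distrib)
    then show ?thesis by (simp add: poly_altdef exp_minus divide_inverse)
  qed
  ultimately show ?thesis by simp
qed

lemma G_deriv: "(G p has_real_derivative G (Gd p) x) (at x)"
proof -
  consider "x > 0" | "x < 0" | "x = 0" by linarith
  then show ?thesis
  proof cases
    case 1
    have "((\<lambda>y. poly p (1/y) * exp (-1/y)) has_real_derivative
       poly (pderiv p) (1/x) * (- 1 / x^2) * exp (-1/x) + poly p (1/x) * (exp (-1/x) * (1/x^2))) (at x)"
      using 1
      by (auto intro!: derivative_eq_intros DERIV_chain2[where f="poly p"] simp: power2_eq_square field_simps)
    moreover have "poly (pderiv p) (1/x) * (- 1 / x^2) * exp (-1/x) + poly p (1/x) * (exp (-1/x) * (1/x^2))
        = G (Gd p) x"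
      using 1 by (simp add: G_def Gd_def power2_eq_square field_simps)
    ultimately have "((\<lambda>y. poly p (1/y) * exp (-1/y)) has_real_derivative G (Gd p) x) (at x)" by simp
    then show ?thesis
      by (rule has_field_derivative_transform_within_open[where S="{0<..}"]) (use 1 in \<open>auto simp: G_def\<close>)
  next
    case 2
    have "((\<lambda>y. 0) has_real_derivative G (Gd p) x) (at x)"
      using 2 by (simp add: G_def)
    then show ?thesis
      by (rule has_field_derivative_transform_within_open[where S="{..<0}"]) (use 2 in \<open>auto simp: G_def\<close>)
  next
    case 3
    have r: "((\<lambda>h. (G p (0 + h) - G p 0) / h) \<longlongrightarrow> 0) (at_right 0)"
    proof -
      have "((\<lambda>y. poly ([:0,1:] * p) y * exp (- y)) \<longlongrightarrow> 0) at_top" by (rule poly_exp_lim)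
      then have "((\<lambda>h. poly ([:0,1:] * p) (inverse h) * exp (- inverse h)) \<longlongrightarrow> 0) (at_right 0)"
        by (subst (asm) filterlim_at_top_to_right) simp
      then show ?thesis
      proof (rule Lim_transform_eventually)
        show "\<forall>\<^sub>F h in at_right 0. poly ([:0, 1:] * p) (inverse h) * exp (- inverse h) = (G p (0 + h) - G p 0) / h"
          using eventually_at_right_less[of 0] 
        proof (rule eventually_mono)
          fix h :: real assume "h > 0"
          then show "poly ([:0, 1:] * p) (inverse h) * exp (- inverse h) = (G p (0 + h) - G p 0) / h"
            by (simp add: G_def divide_inverse)
        qed
      qed
    qed
    have l: "((\<lambda>h. (G p (0 + h) - G p 0) / h) \<longlongrightarrow> 0) (at_left 0)"
    proof (rule Lim_transform_eventually[where f="\<lambda>_. 0"])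
      show "\<forall>\<^sub>F h in at_left 0. 0 = (G p (0 + h) - G p 0) / h"
        using eventually_at_left_real[of "-1" 0, simplified] by (rule eventually_mono) (simp add: G_def)
    qed simp
    have "((\<lambda>h. (G p (0 + h) - G p 0) / h) \<longlongrightarrow> 0) (at 0)"
      using r l by (simp add: filterlim_split_at_real)
    then show ?thesis using 3 by (simp add: DERIV_def G_def)
  qed
qed




inductive Q :: "(real^'n \<Rightarrow> real) \<Rightarrow> bool" where
  base: "Q (\<lambda>x. G p (a * x$i + b))"
| const: "Q (\<lambda>x. c)"
| add: "Q f \<Longrightarrow> Q g \<Longrightarrow> Q (\<lambda>x. f x + g x)"
| mult: "Q f \<Longrightarrow> Q g \<Longrightarrow> Q (\<lambda>x. f x * g x)"

lemma Q_deriv: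
  assumes "Q f"
  shows "\<exists>D. (\<forall>x. (f has_derivative D x) (at x)) \<and> (\<forall>j. Q (\<lambda>x. D x (axis j 1)))"
  using assms
proof induction
  case (base p a i b)
  define D where "D = (\<lambda>x h. G (Gd p) (a * x$i + b) * (a * h$i))"
  have "((\<lambda>x. G p (a * x$i + b)) has_derivative D x) (at x)" for x
  proof -
    have l: "((\<lambda>x. a * x$i + b) has_derivative (\<lambda>h. a * h$i)) (at x)"
      by (auto intro!: derivative_eq_intros bounded_linear.has_derivative[OF bounded_linear_vec_nth])
    have g: "(G p has_derivative (\<lambda>t. G (Gd p) (a * x$i + b) * t)) (at (a * x$i + b))"
      using G_deriv[of p "a * x$i + b"] by (simp add: has_field_derivative_def)
    show ?thesis using has_derivative_compose[OF l g] by (simp add: D_def o_def)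
  qed
  moreover have "Q (\<lambda>x. D x (axis j 1))" for j
  proof (cases "j = i")
    case True
    have "Q (\<lambda>x. G (Gd p) (a * x$i + b) * a)" by (intro Q.mult Q.base Q.const)
    then show ?thesis using True by (simp add: D_def axis_def)
  next
    case False
    have "Q (\<lambda>x. 0)" by (rule Q.const)
    then show ?thesis using False by (simp add: D_def axis_def)
  qed
  ultimately show ?case by blast
next
  case (const c)
  show ?case by (rule exI[of _ "\<lambda>x h. 0"]) (auto intro: Q.const)
next
  case (add f g)
  then obtain D1 D2 where 1: "\<forall>x. (f has_derivative D1 x) (at x)" "\<forall>j. Q (\<lambda>x. D1 x (axis j 1))"
     and 2: "\<forall>x. (g has_derivative D2 x) (at x)" "\<forall>j. Q (\<lambda>x. D2 x (axis j 1))" by blast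
  show ?case
    by (rule exI[of _ "\<lambda>x h. D1 x h + D2 x h"]) (use 1 2 in \<open>auto intro: Q.add has_derivative_add\<close>)
next
  case (mult f g)
  then obtain D1 D2 where 1: "\<forall>x. (f has_derivative D1 x) (at x)" "\<forall>j. Q (\<lambda>x. D1 x (axis j 1))"
     and 2: "\<forall>x. (g has_derivative D2 x) (at x)" "\<forall>j. Q (\<lambda>x. D2 x (axis j 1))" by blast
  show ?case
    by (rule exI[of _ "\<lambda>x h. f x * D2 x h + D1 x h * g x"])
      (use 1 2 mult.hyps in \<open>auto intro!: Q.add Q.mult has_derivative_mult\<close>)
qed

lemma Q_smooth: "Q f \<Longrightarrow> smooth_fun f"
proof (coinduction arbitrary: f rule: smooth_fun.coinduct)
  case (smooth_fun f)
  from Q_deriv[OF smooth_fun] obtain D where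
    D: "\<forall>x. (f has_derivative D x) (at x)" "\<forall>j. Q (\<lambda>x. D x (axis j 1))" by blast
  have pd: "partial_deriv f j = (\<lambda>x. D x (axis j 1))" for j
  proof
    fix x show "partial_deriv f j x = D x (axis j 1)"
      using frechet_derivative_at[OF D(1)[rule_format, of x]] by (simp add: partial_deriv_def)
  qed
  have "f differentiable_on UNIV"
    using D(1) by (auto simp: differentiable_on_def differentiable_def)
  then show ?case using D(2) pd by auto
qed

lemma Q_prod: "finite S \<Longrightarrow> (\<And>i. i \<in> S \<Longrightarrow> Q (f i)) \<Longrightarrow> Q (\<lambda>x. \<Prod>i\<in>S. f i x)"
  by (induction S rule: finite_induct) (auto intro: Q.const Q.mult)

lemma Q_sum: "finite S \<Longrightarrow> (\<And>i. i \<in> S \<Longrightarrow> Q (f i)) \<Longrightarrow> Q (\<lambda>x. \<Sum>i\<in>S. f i x)"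
  by (induction S rule: finite_induct) (auto intro: Q.const Q.add)

lemma Q_power: "Q f \<Longrightarrow> Q (\<lambda>x. f x ^ k)"
  by (induction k) (auto intro: Q.const Q.mult)

lemma Q_diff: "Q f \<Longrightarrow> Q g \<Longrightarrow> Q (\<lambda>x. f x - g x)"
proof -
  assume "Q f" "Q g"
  then have "Q (\<lambda>x. f x + (-1) * g x)" by (intro Q.add Q.mult Q.const)
  then show ?thesis by simp
qed




definition Psi :: "real^'n \<Rightarrow> real^'n \<Rightarrow> real^'n \<Rightarrow> real" where
  "Psi c d x = (\<Prod>i\<in>UNIV. G 1 (1 * x$i + (- c$i)) * G 1 ((-1) * x$i + d$i))"

definition Phi :: "real^'n \<Rightarrow> real^'n \<Rightarrow> nat \<Rightarrow> real^'n \<Rightarrow> real" where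
  "Phi c d k x = 1 - (1 - Psi c d x) ^ k"

lemma G1_bounds: "0 \<le> G 1 y" "G 1 y \<le> 1" "G 1 y > 0 \<longleftrightarrow> y > 0"
  by (auto simp: G_def)

lemma Q_Psi: "Q (Psi c d)"
  unfolding Psi_def by (intro Q_prod Q.mult Q.base) auto

lemma Q_Phi: "Q (Phi c d k)"
  unfolding Phi_def by (intro Q_diff Q.const Q_power Q_Psi)

lemma Psi_bounds: "0 \<le> Psi c d x" "Psi c d x \<le> 1"
  unfolding Psi_def
  by (auto intro!: prod_nonneg prod_le_1 mult_nonneg_nonneg mult_le_one simp: G1_bounds)

lemma G1_mult_pos: "G 1 a * G 1 b > 0 \<longleftrightarrow> a > 0 \<and> b > 0"
proof
  assume h: "G 1 a * G 1 b > 0"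
  have "G 1 a \<noteq> 0" "G 1 b \<noteq> 0" using h by auto
  then have "G 1 a > 0" "G 1 b > 0" using G1_bounds(1)[of a] G1_bounds(1)[of b] by linarith+
  then show "a > 0 \<and> b > 0" using G1_bounds(3) by blast
next
  assume "a > 0 \<and> b > 0"
  then show "G 1 a * G 1 b > 0" using G1_bounds(3) by simp
qed

lemma Psi_pos: "Psi c d x > 0 \<longleftrightarrow> x \<in> box c d"
proof -
  have eq: "Psi c d x = (\<Prod>i\<in>UNIV. G 1 (x$i - c$i) * G 1 (d$i - x$i))"
    unfolding Psi_def by (simp add: add.commute)
  have "Psi c d x > 0 \<longleftrightarrow> (\<forall>i. G 1 (x$i - c$i) * G 1 (d$i - x$i) > 0)"
  proof
    assume h: "0 < Psi c d x"
    show "\<forall>i. 0 < G 1 (x $ i - c $ i) * G 1 (d $ i - x $ i)"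
    proof
      fix i
      have nn: "0 \<le> G 1 (x $ i - c $ i) * G 1 (d $ i - x $ i)" by (simp add: G1_bounds)
      have "G 1 (x $ i - c $ i) * G 1 (d $ i - x $ i) \<noteq> 0"
      proof
        assume z: "G 1 (x $ i - c $ i) * G 1 (d $ i - x $ i) = 0"
        have "Psi c d x = 0" unfolding eq by (rule prod_zero) (use z in auto)
        then show False using h by simp
      qed
      then show "0 < G 1 (x $ i - c $ i) * G 1 (d $ i - x $ i)" using nn by linarith
    qed
  next
    assume "\<forall>i. 0 < G 1 (x $ i - c $ i) * G 1 (d $ i - x $ i)"
    then show "0 < Psi c d x" unfolding eq by (intro prod_pos) simp
  qed
  also have "\<dots> \<longleftrightarrow> (\<forall>i. c$i < x$i \<and> x$i < d$i)"
    by (simp add: G1_mult_pos)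
  finally show ?thesis by (simp add: mem_box_cart)
qed

lemma Phi_bounds: "0 \<le> Phi c d k x" "Phi c d k x \<le> 1"
  using Psi_bounds[of c d x] unfolding Phi_def
  by (auto simp: power_le_one)

lemma Phi_nz: "Phi c d k x \<noteq> 0 \<Longrightarrow> x \<in> box c d"
  using Psi_pos[of c d x] Psi_bounds[of c d x] unfolding Phi_def by force

lemma Phi_lim: "(\<lambda>k. Phi c d k x) \<longlonglongrightarrow> indicator (box c d) x"
proof (cases "x \<in> box c d")
  case True
  then have p: "0 < Psi c d x" by (simp add: Psi_pos)
  have "(\<lambda>k. (1 - Psi c d x) ^ k) \<longlonglongrightarrow> 0"
    by (rule LIMSEQ_power_zero) (use p Psi_bounds[of c d x] in auto)
  then have "(\<lambda>k. 1 - (1 - Psi c d x) ^ k) \<longlonglongrightarrow> 1 - 0"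
    by (intro tendsto_diff tendsto_const)
  then show ?thesis using True by (simp add: Phi_def)
next
  case False
  then have "Psi c d x = 0" using Psi_pos[of c d x] Psi_bounds[of c d x] by linarith
  then show ?thesis using False by (simp add: Phi_def)
qed

lemma Q_continuous: "Q f \<Longrightarrow> continuous_on UNIV f"
  using Q_deriv[of f]
  by (meson differentiable_def differentiable_imp_continuous_on differentiable_on_def)

lemma Phi_test:
  assumes "cbox c d \<subseteq> \<Omega>"
  shows "test_function \<Omega> (Phi c d k)"
proof -
  have sub: "closure {x. Phi c d k x \<noteq> 0} \<subseteq> cbox c d"
    by (rule closure_minimal) (use Phi_nz[of c d k] box_subset_cbox[of c d] in auto)
  show ?thesis unfolding test_function_def
  proof (intro conjI)
    show "smooth_fun (Phi c d k)" by (rule Q_smooth[OF Q_Phi])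
    show "compact (closure {x. Phi c d k x \<noteq> 0})"
      by (metis compact_Int_closed[OF compact_cbox closed_closure] sub inf.absorb2)
    show "closure {x. Phi c d k x \<noteq> 0} \<subseteq> \<Omega>" using sub assms by blast
  qed
qed




lemma One_nth_cart: "(One :: real^'n) $ i = 1"
proof -
  have "axis i (1::real) \<in> Basis" by simp
  then show ?thesis using inner_sum_Basis[of "axis i (1::real)"] by (simp add: cart_eq_inner_axis)
qed

lemma sum_Basis_nth_cart: "(\<Sum>b\<in>(Basis::(real^'n) set). b $ i) = 1"
  using One_nth_cart[of i] by (simp add: sum_component)

lemma box_zero:
  fixes h :: "real^'n \<Rightarrow> real"
  assumes \<Omega>: "open \<Omega>" and h: "integrable (lebesgue_on \<Omega>) h"
    and hyp: "\<And>\<phi>. test_function \<Omega> \<phi> \<Longrightarrow> continuous_on UNIV \<phi> \<Longrightarrow> (\<forall>x. 0 \<le> \<phi> x \<and> \<phi> x \<le> 1)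
        \<Longrightarrow> (\<integral>x. h x * \<phi> x \<partial>lebesgue_on \<Omega>) = 0"
    and sub: "cbox c d \<subseteq> \<Omega>"
  shows "integral (cbox c d) h = 0"
proof -
  let ?M = "lebesgue_on \<Omega>"
  have \<Omega>s: "\<Omega> \<in> sets lebesgue" using \<Omega> by (simp add: borel_open)
  have hm: "h \<in> borel_measurable ?M" using h by simp
  have Phim: "Phi c d k \<in> borel_measurable ?M" for k
    by (rule continuous_imp_measurable_on_sets_lebesgue[OF _ \<Omega>s])
       (rule continuous_on_subset[OF Q_continuous[OF Q_Phi]], simp)
  have sm: "(\<lambda>x. h x * Phi c d k x) \<in> borel_measurable ?M" for k
    using hm Phim by (rule borel_measurable_times)
  have lim: "\<And>x. (\<lambda>k. h x * Phi c d k x) \<longlonglongrightarrow> h x * indicator (box c d) x"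
    by (intro tendsto_mult tendsto_const Phi_lim)
  have fm: "(\<lambda>x. h x * indicator (box c d) x) \<in> borel_measurable ?M"
    by (rule borel_measurable_LIMSEQ_real[OF _ sm]) (use lim in auto)
  have bound: "AE x in ?M. norm (h x * Phi c d k x) \<le> norm (h x)" for k
  proof (rule AE_I2)
    fix x
    have "\<bar>Phi c d k x\<bar> \<le> 1" using Phi_bounds[of c d k x] by simp
    then have "\<bar>h x\<bar> * \<bar>Phi c d k x\<bar> \<le> \<bar>h x\<bar> * 1" by (intro mult_left_mono) auto
    then show "norm (h x * Phi c d k x) \<le> norm (h x)" by (simp add: abs_mult)
  qed
  have "(\<lambda>k. \<integral>x. h x * Phi c d k x \<partial>?M) \<longlonglongrightarrow> (\<integral>x. h x * indicator (box c d) x \<partial>?M)"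
    by (rule integral_dominated_convergence[OF fm sm integrable_norm[OF h] _ bound]) (use lim in auto)
  moreover have "(\<integral>x. h x * Phi c d k x \<partial>?M) = 0" for k
  proof (rule hyp)
    show "test_function \<Omega> (Phi c d k)" by (rule Phi_test[OF sub])
    show "continuous_on UNIV (Phi c d k)" by (rule Q_continuous[OF Q_Phi])
    show "\<forall>x. 0 \<le> Phi c d k x \<and> Phi c d k x \<le> 1" using Phi_bounds by blast
  qed
  ultimately have "(\<lambda>k. 0) \<longlonglongrightarrow> (\<integral>x. h x * indicator (box c d) x \<partial>?M)" by simp
  then have z: "(\<integral>x. h x * indicator (box c d) x \<partial>?M) = 0"
    using LIMSEQ_unique[OF _ tendsto_const] by metis
  have bsub: "box c d \<subseteq> \<Omega>" using sub box_subset_cbox by blast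
  have si: "set_integrable lebesgue \<Omega> h"
    using h \<Omega>s by (simp add: integrable_restrict_space set_integrable_def)
  have siB: "set_integrable lebesgue (box c d) h"
    by (rule set_integrable_subset[OF si _ bsub]) simp
  have "(\<integral>x. h x * indicator (box c d) x \<partial>?M)
      = integral\<^sup>L lebesgue (\<lambda>x. indicator \<Omega> x *\<^sub>R (h x * indicator (box c d) x))"
    using \<Omega>s by (simp add: integral_restrict_space)
  also have "\<dots> = integral\<^sup>L lebesgue (\<lambda>x. indicator (box c d) x *\<^sub>R h x)"
    using bsub by (intro Bochner_Integration.integral_cong) (auto simp: indicator_def)
  also have "\<dots> = integral (box c d) h"
    using set_lebesgue_integral_eq_integral(2)[OF siB] by (simp add: set_lebesgue_integral_def)
  also have "\<dots> = integral (cbox c d) h" by (rule integral_open_interval)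
  finally show ?thesis using z by simp
qed

lemma fund:
  fixes h :: "real^'n \<Rightarrow> real"
  assumes \<Omega>: "open \<Omega>" and h: "integrable (lebesgue_on \<Omega>) h"
    and hyp: "\<And>\<phi>. test_function \<Omega> \<phi> \<Longrightarrow> continuous_on UNIV \<phi> \<Longrightarrow> (\<forall>x. 0 \<le> \<phi> x \<and> \<phi> x \<le> 1)
        \<Longrightarrow> (\<integral>x. h x * \<phi> x \<partial>lebesgue_on \<Omega>) = 0"
  shows "AE x in lebesgue_on \<Omega>. h x = 0"
proof -
  have \<Omega>s: "\<Omega> \<in> sets lebesgue" using \<Omega> by (simp add: borel_open)
  define F where "F = (\<lambda>x. if x \<in> \<Omega> then h x else 0)"
  have si: "set_integrable lebesgue \<Omega> h"
    using h \<Omega>s by (simp add: integrable_restrict_space set_integrable_def)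
  have "h integrable_on \<Omega>" using set_lebesgue_integral_eq_integral(1)[OF si] .
  then have FU: "F integrable_on UNIV" unfolding F_def by (simp add: integrable_restrict_UNIV)
  have Fc: "F integrable_on cbox a b" for a b by (rule integrable_on_subcbox[OF FU]) simp
  obtain N where N: "negligible N"
    "\<And>x e. \<lbrakk>x \<notin> N; 0 < e\<rbrakk> \<Longrightarrow> \<exists>d>0. \<forall>\<eta>. 0 < \<eta> \<and> \<eta> < d \<longrightarrow>
          norm(integral (cbox x (x + \<eta> *\<^sub>R One)) F /\<^sub>R \<eta> ^ DIM(real^'n) - F x) < e"
    using integrable_ccontinuous_explicit[of F] Fc by blast
  have key: "h x = 0" if x: "x \<in> \<Omega>" "x \<notin> N" for x
  proof (rule ccontr)
    assume hx: "h x \<noteq> 0"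
    obtain r where r: "r > 0" "ball x r \<subseteq> \<Omega>" using \<Omega> x(1) open_contains_ball by blast
    obtain dl where dl: "dl > 0" "\<And>\<eta>. 0 < \<eta> \<and> \<eta> < dl \<longrightarrow>
          norm(integral (cbox x (x + \<eta> *\<^sub>R One)) F /\<^sub>R \<eta> ^ DIM(real^'n) - F x) < \<bar>h x\<bar>"
      using N(2)[OF x(2), of "\<bar>h x\<bar>"] hx by auto
    define \<eta> where "\<eta> = min (dl/2) (r / (2 * (real CARD('n) + 1)))"
    have \<eta>: "0 < \<eta>" "\<eta> < dl" using dl r by (auto simp: \<eta>_def)
    have \<eta>r: "\<eta> * (real CARD('n) + 1) < r"
    proof -
      have "\<eta> * (real CARD('n) + 1) \<le> r / (2 * (real CARD('n) + 1)) * (real CARD('n) + 1)"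
        by (intro mult_right_mono) (auto simp: \<eta>_def)
      also have "\<dots> = r / 2" by (simp add: field_simps)
      finally show ?thesis using r by simp
    qed
    have cube: "cbox x (x + \<eta> *\<^sub>R One) \<subseteq> \<Omega>"
    proof
      fix y assume y: "y \<in> cbox x (x + \<eta> *\<^sub>R One)"
      then have yi: "x$i \<le> y$i \<and> y$i \<le> x$i + \<eta>" for i
        by (simp add: mem_box_cart sum_Basis_nth_cart)
      have "norm (y - x) \<le> (\<Sum>i\<in>UNIV. \<bar>(y - x)$i\<bar>)" by (rule norm_le_l1_cart)
      also have "\<dots> \<le> (\<Sum>i\<in>(UNIV::'n set). \<eta>)"
      proof (intro sum_mono)
        fix i show "\<bar>(y - x) $ i\<bar> \<le> \<eta>" using yi[of i] by (simp add: abs_le_iff)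
      qed
      also have "\<dots> = \<eta> * real CARD('n)" by simp
      also have "\<dots> < r" using \<eta>r \<eta> by (simp add: algebra_simps)
      finally have "y \<in> ball x r" by (simp add: dist_norm norm_minus_commute)
      then show "y \<in> \<Omega>" using r by blast
    qed
    have "integral (cbox x (x + \<eta> *\<^sub>R One)) F = integral (cbox x (x + \<eta> *\<^sub>R One)) h"
      by (rule integral_cong) (use cube in \<open>auto simp: F_def\<close>)
    also have "\<dots> = 0" by (rule box_zero[OF \<Omega> h hyp cube]) auto
    finally have "norm (0 - F x) < \<bar>h x\<bar>" using dl(2)[of \<eta>] \<eta> by simp
    then show False using x by (simp add: F_def)
  qed
  have "N \<inter> \<Omega> \<in> null_sets (lebesgue_on \<Omega>)"
    using N(1) \<Omega>s by (simp add: null_sets_restrict_space negligible_iff_null_sets[symmetric] negligible_subset)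
  then show ?thesis
  proof (rule AE_I')
    show "{x \<in> space (lebesgue_on \<Omega>). \<not> h x = 0} \<subseteq> N \<inter> \<Omega>"
      using key by auto
  qed
qed




lemma cont_compact_bounded:
  fixes f :: "real^'n \<Rightarrow> real"
  assumes "continuous_on UNIV f" "compact K" "\<And>x. x \<notin> K \<Longrightarrow> f x = 0"
  shows "\<exists>B. \<forall>x. \<bar>f x\<bar> \<le> B"
proof -
  have "compact (f ` K)"
    by (rule compact_continuous_image[OF continuous_on_subset[OF assms(1)] assms(2)]) simp
  then have "bounded (f ` K)" by (rule compact_imp_bounded)
  then obtain B where B: "\<And>y. y \<in> f ` K \<Longrightarrow> norm y \<le> B"
    unfolding bounded_iff by blast
  have "\<bar>f x\<bar> \<le> max B 0" for x
  proof (cases "x \<in> K")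
    case True
    then show ?thesis using B[of "f x"] by auto
  next
    case False
    then show ?thesis using assms(3)[of x] by simp
  qed
  then show ?thesis by blast
qed

lemma smooth_diff: "smooth_fun f \<Longrightarrow> f differentiable_on UNIV"
  by (erule smooth_fun.cases) simp

lemma smooth_pd: "smooth_fun f \<Longrightarrow> smooth_fun (partial_deriv f i)"
  by (erule smooth_fun.cases) simp

lemma smooth_cont: "smooth_fun f \<Longrightarrow> continuous_on UNIV f"
  using smooth_diff differentiable_imp_continuous_on by blast

lemma test_facts:
  assumes "test_function \<Omega> \<phi>"
  shows "continuous_on UNIV \<phi>" "continuous_on UNIV (partial_deriv \<phi> i)"
    "\<exists>B. \<forall>x. \<bar>\<phi> x\<bar> \<le> B" "\<exists>B. \<forall>x. \<bar>partial_deriv \<phi> i x\<bar> \<le> B"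
proof -
  let ?K = "closure {x. \<phi> x \<noteq> 0}"
  have s: "smooth_fun \<phi>" and K: "compact ?K" using assms by (auto simp: test_function_def)
  show c1: "continuous_on UNIV \<phi>" by (rule smooth_cont[OF s])
  show c2: "continuous_on UNIV (partial_deriv \<phi> i)" by (rule smooth_cont[OF smooth_pd[OF s]])
  have z1: "\<phi> x = 0" if "x \<notin> ?K" for x
    using that closure_subset[of "{x. \<phi> x \<noteq> 0}"] by auto
  show "\<exists>B. \<forall>x. \<bar>\<phi> x\<bar> \<le> B" by (rule cont_compact_bounded[OF c1 K z1])
  have z2: "partial_deriv \<phi> i x = 0" if x: "x \<notin> ?K" for x
  proof -
    have "((\<lambda>y. 0) has_derivative (\<lambda>h. 0)) (at x)" by simp
    then have "(\<phi> has_derivative (\<lambda>h. 0)) (at x)"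
    proof (rule has_derivative_transform_within_open[where s="- ?K"])
      show "open (- ?K)" by auto
      show "x \<in> - ?K" using x by simp
      fix y assume "y \<in> - ?K"
      then have "y \<notin> ?K" by simp
      from z1[OF this] show "0 = \<phi> y" by simp
    qed
    then have "frechet_derivative \<phi> (at x) = (\<lambda>h. 0)" by (rule frechet_derivative_at[symmetric])
    then show ?thesis by (simp add: partial_deriv_def)
  qed
  show "\<exists>B. \<forall>x. \<bar>partial_deriv \<phi> i x\<bar> \<le> B" by (rule cont_compact_bounded[OF c2 K z2])
qed

lemma integrable_mult_bounded:
  fixes f g :: "'a \<Rightarrow> real"
  assumes "integrable M f" "g \<in> borel_measurable M" "\<And>x. \<bar>g x\<bar> \<le> B"
  shows "integrable M (\<lambda>x. f x * g x)"
proof (rule Bochner_Integration.integrable_bound[where f="\<lambda>x. B * f x"])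
  show "integrable M (\<lambda>x. B * f x)" using assms(1) by simp
  show "(\<lambda>x. f x * g x) \<in> borel_measurable M"
    using borel_measurable_integrable[OF assms(1)] assms(2) by (rule borel_measurable_times)
  show "AE x in M. norm (f x * g x) \<le> norm (B * f x)"
  proof (rule AE_I2)
    fix x
    have B0: "0 \<le> B" using assms(3)[of x] by linarith
    have "\<bar>f x * g x\<bar> \<le> \<bar>f x\<bar> * B" by (simp add: abs_mult mult_left_mono assms(3))
    also have "\<dots> = \<bar>B * f x\<bar>" using B0 by (simp add: abs_mult)
    finally show "norm (f x * g x) \<le> norm (B * f x)" by simp
  qed
qed

lemma test_meas:
  assumes "test_function \<Omega> \<phi>" "open \<Omega>"
  shows "\<phi> \<in> borel_measurable (lebesgue_on \<Omega>)" "partial_deriv \<phi> i \<in> borel_measurable (lebesgue_on \<Omega>)"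
proof -
  have \<Omega>s: "\<Omega> \<in> sets lebesgue" using assms(2) by (simp add: borel_open)
  show "\<phi> \<in> borel_measurable (lebesgue_on \<Omega>)"
    by (rule continuous_imp_measurable_on_sets_lebesgue[OF _ \<Omega>s])
       (rule continuous_on_subset[OF test_facts(1)[OF assms(1)]], simp)
  show "partial_deriv \<phi> i \<in> borel_measurable (lebesgue_on \<Omega>)"
    by (rule continuous_imp_measurable_on_sets_lebesgue[OF _ \<Omega>s])
       (rule continuous_on_subset[OF test_facts(2)[OF assms(1)]], simp)
qed

lemma test_integrable:
  assumes "test_function \<Omega> \<phi>" "open \<Omega>" "integrable (lebesgue_on \<Omega>) f"
  shows "integrable (lebesgue_on \<Omega>) (\<lambda>x. f x * \<phi> x)"
    "integrable (lebesgue_on \<Omega>) (\<lambda>x. f x * partial_deriv \<phi> i x)"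
proof -
  obtain B where "\<forall>x. \<bar>\<phi> x\<bar> \<le> B" using test_facts(3)[OF assms(1)] by blast
  then show "integrable (lebesgue_on \<Omega>) (\<lambda>x. f x * \<phi> x)"
    using integrable_mult_bounded[OF assms(3) test_meas(1)[OF assms(1,2)]] by blast
  obtain B where "\<forall>x. \<bar>partial_deriv \<phi> i x\<bar> \<le> B" using test_facts(4)[OF assms(1)] by blast
  then show "integrable (lebesgue_on \<Omega>) (\<lambda>x. f x * partial_deriv \<phi> i x)"
    using integrable_mult_bounded[OF assms(3) test_meas(2)[OF assms(1,2)]] by blast
qed

definition good_grad :: "(real^'n) set \<Rightarrow> (real^'n \<Rightarrow> real) \<Rightarrow> (real^'n \<Rightarrow> real^'n) \<Rightarrow> bool" where
  "good_grad \<Omega> v g \<longleftrightarrow> weak_gradient \<Omega> v g \<and> g \<in> borel_measurable (lebesgue_on \<Omega>)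
      \<and> integrable (lebesgue_on \<Omega>) (\<lambda>x. (norm (g x))\<^sup>2)"

lemma good_comp_integrable:
  fixes g :: "real^'n \<Rightarrow> real^'m"
  assumes "open \<Omega>" "bounded \<Omega>" "g \<in> borel_measurable (lebesgue_on \<Omega>)"
    "integrable (lebesgue_on \<Omega>) (\<lambda>x. (norm (g x))\<^sup>2)"
  shows "integrable (lebesgue_on \<Omega>) (\<lambda>x. g x $ i)"
proof -
  have lm: "\<Omega> \<in> lmeasurable" using assms by (simp add: lmeasurable_open)
  interpret finite_measure "lebesgue_on \<Omega>" by (rule finite_measure_lebesgue_on[OF lm])
  have int: "integrable (lebesgue_on \<Omega>) (\<lambda>x. 1 + (norm (g x))\<^sup>2)"
    using assms(4) by (intro Bochner_Integration.integrable_add) auto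
  have "(\<lambda>x. g x \<bullet> axis i 1) \<in> borel_measurable (lebesgue_on \<Omega>)"
    using assms(3) by (intro borel_measurable_inner) auto
  then have meas: "(\<lambda>x. g x $ i) \<in> borel_measurable (lebesgue_on \<Omega>)" by (simp add: cart_eq_inner_axis)
  have ae: "AE x in lebesgue_on \<Omega>. norm (g x $ i) \<le> norm (1 + (norm (g x))\<^sup>2)"
  proof (rule AE_I2)
    fix x
    have a: "\<bar>g x $ i\<bar> \<le> norm (g x)" by (rule component_le_norm_cart)
    have b: "norm (g x) \<le> 1 + (norm (g x))\<^sup>2"
    proof -
      have "0 \<le> (norm (g x) - 1)\<^sup>2" by simp
      then have "2 * norm (g x) \<le> 1 + (norm (g x))\<^sup>2" by (simp add: power2_diff)
      then show ?thesis using norm_ge_zero[of "g x"] by linarith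
    qed
    show "norm (g x $ i) \<le> norm (1 + (norm (g x))\<^sup>2)" using a b by simp
  qed
  show ?thesis by (rule Bochner_Integration.integrable_bound[OF int meas ae])
qed

lemma wg_unique:
  assumes \<Omega>: "open \<Omega>" "bounded \<Omega>" and g1: "good_grad \<Omega> v g1" and g2: "good_grad \<Omega> v g2"
  shows "AE x in lebesgue_on \<Omega>. g1 x = g2 x"
proof -
  have comp: "AE x in lebesgue_on \<Omega>. g1 x $ i - g2 x $ i = 0" for i
  proof (rule fund[OF \<Omega>(1)])
    have i1: "integrable (lebesgue_on \<Omega>) (\<lambda>x. g1 x $ i)"
      using g1 \<Omega> by (intro good_comp_integrable) (auto simp: good_grad_def)
    have i2: "integrable (lebesgue_on \<Omega>) (\<lambda>x. g2 x $ i)"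
      using g2 \<Omega> by (intro good_comp_integrable) (auto simp: good_grad_def)
    show "integrable (lebesgue_on \<Omega>) (\<lambda>x. g1 x $ i - g2 x $ i)" using i1 i2 by simp
    fix \<phi> assume t: "test_function \<Omega> \<phi>"
    have e1: "(\<integral>x. v x * partial_deriv \<phi> i x \<partial>lebesgue_on \<Omega>) = - (\<integral>x. g1 x $ i * \<phi> x \<partial>lebesgue_on \<Omega>)"
      using g1 t by (auto simp: good_grad_def weak_gradient_def)
    have e2: "(\<integral>x. v x * partial_deriv \<phi> i x \<partial>lebesgue_on \<Omega>) = - (\<integral>x. g2 x $ i * \<phi> x \<partial>lebesgue_on \<Omega>)"
      using g2 t by (auto simp: good_grad_def weak_gradient_def)
    have "(\<integral>x. (g1 x $ i - g2 x $ i) * \<phi> x \<partial>lebesgue_on \<Omega>)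
        = (\<integral>x. g1 x $ i * \<phi> x - g2 x $ i * \<phi> x \<partial>lebesgue_on \<Omega>)"
      by (simp add: left_diff_distrib)
    also have "\<dots> = (\<integral>x. g1 x $ i * \<phi> x \<partial>lebesgue_on \<Omega>) - (\<integral>x. g2 x $ i * \<phi> x \<partial>lebesgue_on \<Omega>)"
      by (rule Bochner_Integration.integral_diff; rule test_integrable[OF t \<Omega>(1)]) (fact i1 i2)+
    also have "\<dots> = 0" using e1 e2 by simp
    finally show "(\<integral>x. (g1 x $ i - g2 x $ i) * \<phi> x \<partial>lebesgue_on \<Omega>) = 0" .
  qed
  have "AE x in lebesgue_on \<Omega>. \<forall>i\<in>UNIV. g1 x $ i - g2 x $ i = 0"
    by (rule AE_finite_allI) (use comp in auto)
  then show ?thesis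
  proof (rule AE_mp)
    show "AE x in lebesgue_on \<Omega>. (\<forall>i\<in>UNIV. g1 x $ i - g2 x $ i = 0) \<longrightarrow> g1 x = g2 x"
      by (rule AE_I2) (simp add: vec_eq_iff)
  qed
qed

lemma grad_norm_eq:
  assumes \<Omega>: "open \<Omega>" "bounded \<Omega>" and g: "good_grad \<Omega> v g"
  shows "grad_norm2_sq \<Omega> v = (\<integral>x. (norm (g x))\<^sup>2 \<partial>lebesgue_on \<Omega>)"
proof -
  define G where "G = (SOME g. weak_gradient \<Omega> v g \<and> g \<in> borel_measurable (lebesgue_on \<Omega>)
      \<and> integrable (lebesgue_on \<Omega>) (\<lambda>x. (norm (g x))\<^sup>2))"
  have G: "good_grad \<Omega> v G"
    unfolding G_def good_grad_def by (rule someI[of _ g]) (use g in \<open>simp add: good_grad_def\<close>)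
  have ae: "AE x in lebesgue_on \<Omega>. G x = g x" by (rule wg_unique[OF \<Omega> G g])
  have "(\<integral>x. (norm (G x))\<^sup>2 \<partial>lebesgue_on \<Omega>) = (\<integral>x. (norm (g x))\<^sup>2 \<partial>lebesgue_on \<Omega>)"
  proof (rule integral_cong_AE)
    show "(\<lambda>x. (norm (G x))\<^sup>2) \<in> borel_measurable (lebesgue_on \<Omega>)"
      using G by (auto simp: good_grad_def intro: borel_measurable_integrable)
    show "(\<lambda>x. (norm (g x))\<^sup>2) \<in> borel_measurable (lebesgue_on \<Omega>)"
      using g by (auto simp: good_grad_def intro: borel_measurable_integrable)
    show "AE x in lebesgue_on \<Omega>. (norm (G x))\<^sup>2 = (norm (g x))\<^sup>2"
      using ae by (rule AE_mp) (rule AE_I2, simp)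
  qed
  then show ?thesis unfolding grad_norm2_sq_def G_def by simp
qed




lemma exp_strict: "x \<noteq> 0 \<Longrightarrow> 1 + x < exp (x::real)"
proof -
  assume x: "x \<noteq> 0"
  show ?thesis
  proof (cases "1 + x/2 \<ge> 0")
    case True
    have "(1 + x/2)^2 \<le> (exp (x/2))^2"
      by (rule power_mono) (use True exp_ge_add_one_self[of "x/2"] in auto)
    also have "(exp (x/2))^2 = exp x" by (simp add: power2_eq_square exp_add[symmetric])
    finally have "(1 + x/2)^2 \<le> exp x" .
    moreover have "1 + x < (1 + x/2)^2"
    proof -
      have "0 < x^2" using x by simp
      then show ?thesis by (simp add: power2_eq_square field_simps)
    qed
    ultimately show ?thesis by linarith
  next
    case False
    then have "1 + x < 0" by linarith
    then show ?thesis using exp_gt_zero[of x] by linarith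
  qed
qed

lemma exp_le_tangent: "exp m * (1 + (p - m)) \<le> exp (p::real)"
proof -
  have "exp m * (1 + (p - m)) \<le> exp m * exp (p - m)"
    by (intro mult_left_mono exp_ge_add_one_self) auto
  then show ?thesis by (simp add: exp_diff)
qed

lemma exp_lt_tangent: "p \<noteq> m \<Longrightarrow> exp m * (1 + (p - m)) < exp (p::real)"
proof -
  assume "p \<noteq> m"
  then have "exp m * (1 + (p - m)) < exp m * exp (p - m)"
    by (intro mult_strict_left_mono exp_strict) auto
  then show ?thesis by (simp add: exp_diff)
qed

lemma exp_conv:
  assumes "0 < t" "t < 1"
  shows "exp (t*p + (1-t)*q) \<le> t * exp p + (1-t) * exp (q::real)"
proof -
  define m where "m = t*p + (1-t)*q"
  have "t * (exp m * (1 + (p - m))) + (1-t) * (exp m * (1 + (q - m))) \<le> t * exp p + (1-t) * exp q"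
    using assms by (intro add_mono mult_left_mono exp_le_tangent) auto
  moreover have "t * (exp m * (1 + (p - m))) + (1-t) * (exp m * (1 + (q - m))) = exp m"
    by (simp add: m_def algebra_simps)
  ultimately show ?thesis by (simp add: m_def)
qed

lemma exp_conv_strict:
  assumes "0 < t" "t < 1" "p \<noteq> q"
  shows "exp (t*p + (1-t)*q) < t * exp p + (1-t) * exp (q::real)"
proof -
  define m where "m = t*p + (1-t)*q"
  have pm: "p \<noteq> m"
  proof
    assume "p = m"
    then have "(1 - t) * (p - q) = 0" by (simp add: m_def algebra_simps)
    then show False using assms by simp
  qed
  have "t * (exp m * (1 + (p - m))) + (1-t) * (exp m * (1 + (q - m))) < t * exp p + (1-t) * exp q"
  proof (rule add_less_le_mono)
    show "t * (exp m * (1 + (p - m))) < t * exp p"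
      using assms pm by (intro mult_strict_left_mono exp_lt_tangent) auto
    show "(1-t) * (exp m * (1 + (q - m))) \<le> (1-t) * exp q"
      using assms by (intro mult_left_mono exp_le_tangent) auto
  qed
  moreover have "t * (exp m * (1 + (p - m))) + (1-t) * (exp m * (1 + (q - m))) = exp m"
    by (simp add: m_def algebra_simps)
  ultimately show ?thesis by (simp add: m_def)
qed

lemma (in finite_measure) lse:
  fixes u v :: "'a \<Rightarrow> real"
  assumes iu: "integrable M u" and iv: "integrable M v"
    and eu: "integrable M (\<lambda>x. exp (u x))" and ev: "integrable M (\<lambda>x. exp (v x))"
    and t: "0 < t" "t < 1" and pos: "emeasure M (space M) \<noteq> 0"
  shows "integrable M (\<lambda>x. exp (t * u x + (1-t) * v x))"
    and "ln (\<integral>x. exp (t * u x + (1-t) * v x) \<partial>M)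
          \<le> t * ln (\<integral>x. exp (u x) \<partial>M) + (1-t) * ln (\<integral>x. exp (v x) \<partial>M)"
    and "(\<integral>x. u x \<partial>M) = (\<integral>x. v x \<partial>M) \<Longrightarrow> \<not> (AE x in M. u x = v x) \<Longrightarrow>
          ln (\<integral>x. exp (t * u x + (1-t) * v x) \<partial>M)
          < t * ln (\<integral>x. exp (u x) \<partial>M) + (1-t) * ln (\<integral>x. exp (v x) \<partial>M)"
proof -
  define A where "A = (\<integral>x. exp (u x) \<partial>M)"
  define B where "B = (\<integral>x. exp (v x) \<partial>M)"
  define w where "w = (\<lambda>x. t * u x + (1-t) * v x)"
  have mu: "u \<in> borel_measurable M" and mv: "v \<in> borel_measurable M" using iu iv by auto
  have A: "0 < A" unfolding A_def
    using integral_less_AE_space[of "\<lambda>x. 0" "\<lambda>x. exp (u x)"] eu pos by auto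
  have B: "0 < B" unfolding B_def
    using integral_less_AE_space[of "\<lambda>x. 0" "\<lambda>x. exp (v x)"] ev pos by auto
  define K where "K = t * ln A + (1-t) * ln B"
  define p where "p = (\<lambda>x. u x - ln A)"
  define q where "q = (\<lambda>x. v x - ln B)"
  have wpq: "exp (w x) = exp K * exp (t * p x + (1-t) * q x)" for x
  proof -
    have "w x = K + (t * p x + (1-t) * q x)" by (simp add: w_def K_def p_def q_def algebra_simps)
    then show ?thesis by (simp add: exp_add)
  qed
  have ep: "exp (p x) = exp (u x) / A" for x using A by (simp add: p_def exp_diff)
  have eq: "exp (q x) = exp (v x) / B" for x using B by (simp add: q_def exp_diff)
  define R where "R = (\<lambda>x. exp K * (t * (exp (u x) / A) + (1-t) * (exp (v x) / B)))"
  have iR: "integrable M R" unfolding R_def using eu ev by auto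
  have intR: "(\<integral>x. R x \<partial>M) = exp K"
  proof -
    have "(\<integral>x. R x \<partial>M) = exp K * (t * ((\<integral>x. exp (u x) \<partial>M) / A) + (1-t) * ((\<integral>x. exp (v x) \<partial>M) / B))"
      unfolding R_def using eu ev by simp
    also have "\<dots> = exp K" using A B by (simp add: A_def[symmetric] B_def[symmetric])
    finally show ?thesis .
  qed
  have le: "exp (w x) \<le> R x" for x
    unfolding wpq R_def ep[symmetric] eq[symmetric]
    by (intro mult_left_mono exp_conv t) auto
  have mw: "(\<lambda>x. exp (w x)) \<in> borel_measurable M" unfolding w_def using mu mv by measurable
  have iw: "integrable M (\<lambda>x. exp (w x))"
  proof (rule Bochner_Integration.integrable_bound[OF iR mw])
    show "AE x in M. norm (exp (w x)) \<le> norm (R x)"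
    proof (rule AE_I2)
      fix x show "norm (exp (w x)) \<le> norm (R x)" using le[of x] by simp
    qed
  qed
  then show "integrable M (\<lambda>x. exp (t * u x + (1-t) * v x))" by (simp add: w_def)
  have wpos: "0 < (\<integral>x. exp (w x) \<partial>M)"
    using integral_less_AE_space[of "\<lambda>x. 0" "\<lambda>x. exp (w x)"] iw pos by auto
  have "(\<integral>x. exp (w x) \<partial>M) \<le> exp K"
    using integral_mono[OF iw iR le] intR by simp
  then have "ln (\<integral>x. exp (w x) \<partial>M) \<le> K"
    using wpos by (metis ln_exp ln_le_cancel_iff exp_gt_zero)
  then show "ln (\<integral>x. exp (t * u x + (1-t) * v x) \<partial>M)
          \<le> t * ln (\<integral>x. exp (u x) \<partial>M) + (1-t) * ln (\<integral>x. exp (v x) \<partial>M)"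
    by (simp add: w_def K_def A_def B_def)
  assume uv: "(\<integral>x. u x \<partial>M) = (\<integral>x. v x \<partial>M)" and nae: "\<not> (AE x in M. u x = v x)"
  define D where "D = {x\<in>space M. p x \<noteq> q x}"
  have Ds: "D \<in> sets M" unfolding D_def p_def q_def using mu mv by measurable
  have "emeasure M D \<noteq> 0"
  proof
    assume D0: "emeasure M D = 0"
    have aepq: "AE x in M. p x = q x"
      using AE_iff_measurable[OF Ds, of "\<lambda>x. p x = q x"] D0 by (simp add: D_def)
    then have ae: "AE x in M. u x = v x + (ln A - ln B)"
      by (rule AE_mp) (rule AE_I2, simp add: p_def q_def algebra_simps)
    have "(\<integral>x. u x \<partial>M) = (\<integral>x. v x + (ln A - ln B) \<partial>M)"
      by (rule integral_cong_AE) (use mu mv ae in auto)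
    also have "\<dots> = (\<integral>x. v x \<partial>M) + (ln A - ln B) * measure M (space M)"
      using iv by simp
    finally have "(ln A - ln B) * measure M (space M) = 0" using uv by simp
    moreover have "measure M (space M) \<noteq> 0"
      using pos by (simp add: emeasure_eq_measure)
    ultimately have "ln A = ln B" by simp
    then have "AE x in M. u x = v x" using ae by simp
    then show False using nae by simp
  qed
  have "(\<integral>x. exp (w x) \<partial>M) < (\<integral>x. R x \<partial>M)"
  proof (rule integral_less_AE[OF iw iR \<open>emeasure M D \<noteq> 0\<close> Ds])
    show "AE x in M. x \<in> D \<longrightarrow> exp (w x) \<noteq> R x"
    proof (rule AE_I2, rule impI)
      fix x assume "x \<in> D"
      then have "p x \<noteq> q x" by (simp add: D_def)
      then have "exp (w x) < R x"
        unfolding wpq R_def ep[symmetric] eq[symmetric]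
        by (intro mult_strict_left_mono exp_conv_strict t) auto
      then show "exp (w x) \<noteq> R x" by simp
    qed
    show "AE x in M. exp (w x) \<le> R x" using le by simp
  qed
  then have "ln (\<integral>x. exp (w x) \<partial>M) < K"
    using wpos intR by (metis ln_exp ln_less_cancel_iff exp_gt_zero)
  then show "ln (\<integral>x. exp (t * u x + (1-t) * v x) \<partial>M)
          < t * ln (\<integral>x. exp (u x) \<partial>M) + (1-t) * ln (\<integral>x. exp (v x) \<partial>M)"
    by (simp add: w_def K_def A_def B_def)
qed




lemma sq_conv:
  fixes n1 n2 t :: real
  assumes "0 \<le> t" "t \<le> 1"
  shows "(t * n1 + (1-t) * n2)^2 \<le> t * n1^2 + (1-t) * n2^2"
proof -
  have "t * n1^2 + (1-t) * n2^2 - (t * n1 + (1-t) * n2)^2 = t * (1-t) * (n1 - n2)^2"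
    by (simp add: power2_eq_square algebra_simps)
  moreover have "0 \<le> t * (1-t) * (n1 - n2)^2" using assms by simp
  ultimately show ?thesis by linarith
qed

lemma norm_sq_conv:
  fixes a b :: "'a::real_normed_vector"
  assumes "0 \<le> t" "t \<le> 1"
  shows "(norm (t *\<^sub>R a + (1-t) *\<^sub>R b))^2 \<le> t * (norm a)^2 + (1-t) * (norm b)^2"
proof -
  have "norm (t *\<^sub>R a + (1-t) *\<^sub>R b) \<le> t * norm a + (1-t) * norm b"
    using norm_triangle_ineq[of "t *\<^sub>R a" "(1-t) *\<^sub>R b"] assms by simp
  then have "(norm (t *\<^sub>R a + (1-t) *\<^sub>R b))^2 \<le> (t * norm a + (1-t) * norm b)^2"
    by (rule power_mono) simp
  also have "\<dots> \<le> t * (norm a)^2 + (1-t) * (norm b)^2" by (rule sq_conv[OF assms])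
  finally show ?thesis .
qed

lemma norm_sq_bound:
  fixes a b :: "'a::real_normed_vector"
  shows "(norm (s *\<^sub>R a + r *\<^sub>R b))^2 \<le> 2 * s^2 * (norm a)^2 + 2 * r^2 * (norm b)^2"
proof -
  have "norm (s *\<^sub>R a + r *\<^sub>R b) \<le> \<bar>s\<bar> * norm a + \<bar>r\<bar> * norm b"
    using norm_triangle_ineq[of "s *\<^sub>R a" "r *\<^sub>R b"] by simp
  then have "(norm (s *\<^sub>R a + r *\<^sub>R b))^2 \<le> (\<bar>s\<bar> * norm a + \<bar>r\<bar> * norm b)^2"
    by (rule power_mono) simp
  also have "\<dots> \<le> 2 * s^2 * (norm a)^2 + 2 * r^2 * (norm b)^2"
  proof -
    define X where "X = \<bar>s\<bar> * norm a"
    define Y where "Y = \<bar>r\<bar> * norm b"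
    have "0 \<le> (X - Y)^2" by simp
    then have "(X + Y)^2 \<le> 2 * X^2 + 2 * Y^2" by (simp add: power2_eq_square algebra_simps)
    moreover have "X^2 = s^2 * (norm a)^2" "Y^2 = r^2 * (norm b)^2"
      by (simp_all add: X_def Y_def power_mult_distrib)
    ultimately show ?thesis by (simp add: X_def Y_def)
  qed
  finally show ?thesis .
qed

lemma wg_lin:
  fixes u v :: "real^'n \<Rightarrow> real"
  assumes \<Omega>: "open \<Omega>" "bounded \<Omega>" and g1: "good_grad \<Omega> u g1" and g2: "good_grad \<Omega> v g2"
    and iu: "integrable (lebesgue_on \<Omega>) u" and iv: "integrable (lebesgue_on \<Omega>) v"
  shows "good_grad \<Omega> (\<lambda>x. s * u x + r * v x) (\<lambda>x. s *\<^sub>R g1 x + r *\<^sub>R g2 x)"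
proof -
  let ?M = "lebesgue_on \<Omega>"
  have w1: "weak_gradient \<Omega> u g1" and m1: "g1 \<in> borel_measurable ?M"
    and n1: "integrable ?M (\<lambda>x. (norm (g1 x))\<^sup>2)" using g1 by (auto simp: good_grad_def)
  have w2: "weak_gradient \<Omega> v g2" and m2: "g2 \<in> borel_measurable ?M"
    and n2: "integrable ?M (\<lambda>x. (norm (g2 x))\<^sup>2)" using g2 by (auto simp: good_grad_def)
  have c1: "integrable ?M (\<lambda>x. g1 x $ i)" for i by (rule good_comp_integrable[OF \<Omega> m1 n1])
  have c2: "integrable ?M (\<lambda>x. g2 x $ i)" for i by (rule good_comp_integrable[OF \<Omega> m2 n2])
  have li: "locally_integrable_on \<Omega> (\<lambda>x. s * u x + r * v x)"
    using w1 w2 by (auto simp: weak_gradient_def locally_integrable_on_def)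
  have lg: "locally_integrable_on \<Omega> (\<lambda>x. (s *\<^sub>R g1 x + r *\<^sub>R g2 x) $ i)" for i
    using w1 w2 by (auto simp: weak_gradient_def locally_integrable_on_def)
  have eq: "(\<integral>x. (s * u x + r * v x) * partial_deriv \<phi> i x \<partial>?M) =
      - (\<integral>x. (s *\<^sub>R g1 x + r *\<^sub>R g2 x) $ i * \<phi> x \<partial>?M)" if t: "test_function \<Omega> \<phi>" for \<phi> i
  proof -
    have a1: "integrable ?M (\<lambda>x. u x * partial_deriv \<phi> i x)" by (rule test_integrable(2)[OF t \<Omega>(1) iu])
    have a2: "integrable ?M (\<lambda>x. v x * partial_deriv \<phi> i x)" by (rule test_integrable(2)[OF t \<Omega>(1) iv])
    have b1: "integrable ?M (\<lambda>x. g1 x $ i * \<phi> x)" by (rule test_integrable(1)[OF t \<Omega>(1) c1])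
    have b2: "integrable ?M (\<lambda>x. g2 x $ i * \<phi> x)" by (rule test_integrable(1)[OF t \<Omega>(1) c2])
    have e1: "(\<integral>x. u x * partial_deriv \<phi> i x \<partial>?M) = - (\<integral>x. g1 x $ i * \<phi> x \<partial>?M)"
      using w1 t by (simp add: weak_gradient_def)
    have e2: "(\<integral>x. v x * partial_deriv \<phi> i x \<partial>?M) = - (\<integral>x. g2 x $ i * \<phi> x \<partial>?M)"
      using w2 t by (simp add: weak_gradient_def)
    have "(\<integral>x. (s * u x + r * v x) * partial_deriv \<phi> i x \<partial>?M)
        = (\<integral>x. s * (u x * partial_deriv \<phi> i x) + r * (v x * partial_deriv \<phi> i x) \<partial>?M)"
      by (simp add: algebra_simps)
    also have "\<dots> = s * (\<integral>x. u x * partial_deriv \<phi> i x \<partial>?M) + r * (\<integral>x. v x * partial_deriv \<phi> i x \<partial>?M)"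
      using a1 a2 by simp
    also have "\<dots> = - (s * (\<integral>x. g1 x $ i * \<phi> x \<partial>?M) + r * (\<integral>x. g2 x $ i * \<phi> x \<partial>?M))"
      using e1 e2 by simp
    also have "s * (\<integral>x. g1 x $ i * \<phi> x \<partial>?M) + r * (\<integral>x. g2 x $ i * \<phi> x \<partial>?M)
        = (\<integral>x. s * (g1 x $ i * \<phi> x) + r * (g2 x $ i * \<phi> x) \<partial>?M)"
      using b1 b2 by simp
    also have "(\<integral>x. s * (g1 x $ i * \<phi> x) + r * (g2 x $ i * \<phi> x) \<partial>?M)
        = (\<integral>x. (s *\<^sub>R g1 x + r *\<^sub>R g2 x) $ i * \<phi> x \<partial>?M)"
      by (simp add: algebra_simps)
    finally show ?thesis .
  qed
  have mg: "(\<lambda>x. s *\<^sub>R g1 x + r *\<^sub>R g2 x) \<in> borel_measurable ?M"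
    using m1 m2 by (intro borel_measurable_add borel_measurable_scaleR) auto
  have ng: "integrable ?M (\<lambda>x. (norm (s *\<^sub>R g1 x + r *\<^sub>R g2 x))\<^sup>2)"
  proof (rule Bochner_Integration.integrable_bound[where f="\<lambda>x. 2 * s^2 * (norm (g1 x))^2 + 2 * r^2 * (norm (g2 x))^2"])
    show "integrable ?M (\<lambda>x. 2 * s^2 * (norm (g1 x))^2 + 2 * r^2 * (norm (g2 x))^2)"
      using n1 n2 by simp
    show "(\<lambda>x. (norm (s *\<^sub>R g1 x + r *\<^sub>R g2 x))\<^sup>2) \<in> borel_measurable ?M"
      by (rule borel_measurable_power, rule measurable_compose[OF mg borel_measurable_norm])
    show "AE x in ?M. norm ((norm (s *\<^sub>R g1 x + r *\<^sub>R g2 x))\<^sup>2) \<le> norm (2 * s^2 * (norm (g1 x))^2 + 2 * r^2 * (norm (g2 x))^2)"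
    proof (rule AE_I2)
      fix x
      have "(norm (s *\<^sub>R g1 x + r *\<^sub>R g2 x))\<^sup>2 \<le> 2 * s^2 * (norm (g1 x))^2 + 2 * r^2 * (norm (g2 x))^2"
        by (rule norm_sq_bound)
      then show "norm ((norm (s *\<^sub>R g1 x + r *\<^sub>R g2 x))\<^sup>2) \<le> norm (2 * s^2 * (norm (g1 x))^2 + 2 * r^2 * (norm (g2 x))^2)"
        by simp
    qed
  qed
  show ?thesis unfolding good_grad_def weak_gradient_def
    using li lg eq mg ng by blast
qed




lemma (in finite_measure) exp_int_pos:
  fixes f :: "'a \<Rightarrow> real"
  assumes "integrable M (\<lambda>x. exp (f x))" "emeasure M (space M) \<noteq> 0"
  shows "0 < (\<integral>x. exp (f x) \<partial>M)"
  using integral_less_AE_space[of "\<lambda>x. 0" "\<lambda>x. exp (f x)"] assms by auto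

lemma (in finite_measure) lse_div:
  fixes u v :: "'a \<Rightarrow> real"
  assumes iu: "integrable M u" and iv: "integrable M v"
    and eu: "integrable M (\<lambda>x. exp (u x))" and ev: "integrable M (\<lambda>x. exp (v x))"
    and t: "0 < t" "t < 1" and pos: "emeasure M (space M) \<noteq> 0" and c: "0 < c"
  shows "ln ((\<integral>x. exp (t * u x + (1-t) * v x) \<partial>M) / c)
          \<le> t * ln ((\<integral>x. exp (u x) \<partial>M) / c) + (1-t) * ln ((\<integral>x. exp (v x) \<partial>M) / c)"
    and "(\<integral>x. u x \<partial>M) = (\<integral>x. v x \<partial>M) \<Longrightarrow> \<not> (AE x in M. u x = v x) \<Longrightarrow>
          ln ((\<integral>x. exp (t * u x + (1-t) * v x) \<partial>M) / c)
          < t * ln ((\<integral>x. exp (u x) \<partial>M) / c) + (1-t) * ln ((\<integral>x. exp (v x) \<partial>M) / c)"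
proof -
  have iw: "integrable M (\<lambda>x. exp (t * u x + (1-t) * v x))" by (rule lse(1)[OF iu iv eu ev t pos])
  have pu: "0 < (\<integral>x. exp (u x) \<partial>M)" by (rule exp_int_pos[OF eu pos])
  have pv: "0 < (\<integral>x. exp (v x) \<partial>M)" by (rule exp_int_pos[OF ev pos])
  have pw: "0 < (\<integral>x. exp (t * u x + (1-t) * v x) \<partial>M)" by (rule exp_int_pos[OF iw pos])
  have r: "t * ln ((\<integral>x. exp (u x) \<partial>M) / c) + (1-t) * ln ((\<integral>x. exp (v x) \<partial>M) / c)
      = t * ln (\<integral>x. exp (u x) \<partial>M) + (1-t) * ln (\<integral>x. exp (v x) \<partial>M) - ln c"
    using pu pv c by (simp add: ln_div algebra_simps)
  have l: "ln ((\<integral>x. exp (t * u x + (1-t) * v x) \<partial>M) / c)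
      = ln (\<integral>x. exp (t * u x + (1-t) * v x) \<partial>M) - ln c"
    using pw c by (simp add: ln_div)
  show "ln ((\<integral>x. exp (t * u x + (1-t) * v x) \<partial>M) / c)
          \<le> t * ln ((\<integral>x. exp (u x) \<partial>M) / c) + (1-t) * ln ((\<integral>x. exp (v x) \<partial>M) / c)"
    unfolding r l using lse(2)[OF iu iv eu ev t pos] by simp
  assume "(\<integral>x. u x \<partial>M) = (\<integral>x. v x \<partial>M)" "\<not> (AE x in M. u x = v x)"
  then show "ln ((\<integral>x. exp (t * u x + (1-t) * v x) \<partial>M) / c)
          < t * ln ((\<integral>x. exp (u x) \<partial>M) / c) + (1-t) * ln ((\<integral>x. exp (v x) \<partial>M) / c)"
    unfolding r l using lse(3)[OF iu iv eu ev t pos] by simp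
qed

definition breal :: "(real ^ 'n) set \<Rightarrow> (real ^ 'n \<Rightarrow> real) \<Rightarrow> real \<Rightarrow> (real ^ 'n \<Rightarrow> real) \<Rightarrow> real" where
  "breal \<Omega> C \<delta> v = Nconst \<Omega> C \<delta> * ln ((\<integral>x. exp (- v x) \<partial>lebesgue_on \<Omega>) / measure lebesgue \<Omega>)
                + Pconst \<Omega> C \<delta> * ln ((\<integral>x. exp (v x) \<partial>lebesgue_on \<Omega>) / measure lebesgue \<Omega>)
                + (\<integral>x. C x * v x \<partial>lebesgue_on \<Omega>)"

lemma Sigma_D:
  assumes "v \<in> Sigma_set \<Omega> C \<delta>"
  shows "integrable (lebesgue_on \<Omega>) v" "(\<integral>x. v x \<partial>lebesgue_on \<Omega>) = 0"
    "integrable (lebesgue_on \<Omega>) (\<lambda>x. exp (- v x))" "integrable (lebesgue_on \<Omega>) (\<lambda>x. exp (v x))"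
    "integrable (lebesgue_on \<Omega>) (\<lambda>x. C x * v x)" "\<exists>g. good_grad \<Omega> v g"
    "bfun \<Omega> C \<delta> v = ereal (breal \<Omega> C \<delta> v)"
proof -
  have b: "bfun \<Omega> C \<delta> v < \<infinity>" using assms by (simp add: Sigma_set_def)
  show "integrable (lebesgue_on \<Omega>) v" "(\<integral>x. v x \<partial>lebesgue_on \<Omega>) = 0" "\<exists>g. good_grad \<Omega> v g"
    using assms by (auto simp: Sigma_set_def in_L1_def grad_in_L2_def good_grad_def)
  show i3: "integrable (lebesgue_on \<Omega>) (\<lambda>x. exp (- v x))" "integrable (lebesgue_on \<Omega>) (\<lambda>x. exp (v x))"
    "integrable (lebesgue_on \<Omega>) (\<lambda>x. C x * v x)"
    using b by (auto simp: bfun_def split: if_splits)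
  show "bfun \<Omega> C \<delta> v = ereal (breal \<Omega> C \<delta> v)" using i3 by (simp add: bfun_def breal_def)
qed

lemma Sigma_I:
  assumes "integrable (lebesgue_on \<Omega>) v" "(\<integral>x. v x \<partial>lebesgue_on \<Omega>) = 0"
    "integrable (lebesgue_on \<Omega>) (\<lambda>x. exp (- v x))" "integrable (lebesgue_on \<Omega>) (\<lambda>x. exp (v x))"
    "integrable (lebesgue_on \<Omega>) (\<lambda>x. C x * v x)" "good_grad \<Omega> v g"
  shows "v \<in> Sigma_set \<Omega> C \<delta>" "bfun \<Omega> C \<delta> v = ereal (breal \<Omega> C \<delta> v)"
proof -
  show b: "bfun \<Omega> C \<delta> v = ereal (breal \<Omega> C \<delta> v)" using assms by (simp add: bfun_def breal_def)
  show "v \<in> Sigma_set \<Omega> C \<delta>"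
    using assms b unfolding Sigma_set_def in_L1_def grad_in_L2_def good_grad_def by auto
qed

lemma bbar_Sigma:
  assumes "v \<in> Sigma_set \<Omega> C \<delta>"
  shows "bbar \<Omega> C \<delta> lam v = ereal (lam\<^sup>2 * grad_norm2_sq \<Omega> v + breal \<Omega> C \<delta> v)"
  using assms Sigma_D(7)[OF assms] by (simp add: bbar_def)




lemma core:
  fixes \<Omega> :: "(real ^ 'n) set" and C :: "real ^ 'n \<Rightarrow> real"
  assumes \<Omega>: "open \<Omega>" "bounded \<Omega>" "\<Omega> \<noteq> {}" and \<delta>: "\<delta> > 0" and lam: "lam \<ge> 0"
    and u: "u \<in> Sigma_set \<Omega> C \<delta>" and v: "v \<in> Sigma_set \<Omega> C \<delta>" and t: "0 < t" "t < 1"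
  shows "(\<lambda>x. t * u x + (1-t) * v x) \<in> Sigma_set \<Omega> C \<delta>"
    and "lam\<^sup>2 * grad_norm2_sq \<Omega> (\<lambda>x. t * u x + (1-t) * v x) + breal \<Omega> C \<delta> (\<lambda>x. t * u x + (1-t) * v x)
         \<le> t * (lam\<^sup>2 * grad_norm2_sq \<Omega> u + breal \<Omega> C \<delta> u) + (1-t) * (lam\<^sup>2 * grad_norm2_sq \<Omega> v + breal \<Omega> C \<delta> v)"
    and "\<not> (AE x in lebesgue_on \<Omega>. u x = v x) \<Longrightarrow>
         lam\<^sup>2 * grad_norm2_sq \<Omega> (\<lambda>x. t * u x + (1-t) * v x) + breal \<Omega> C \<delta> (\<lambda>x. t * u x + (1-t) * v x)
         < t * (lam\<^sup>2 * grad_norm2_sq \<Omega> u + breal \<Omega> C \<delta> u) + (1-t) * (lam\<^sup>2 * grad_norm2_sq \<Omega> v + breal \<Omega> C \<delta> v)"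
proof -
  let ?M = "lebesgue_on \<Omega>"
  define w where "w = (\<lambda>x. t * u x + (1-t) * v x)"
  have \<Omega>s: "\<Omega> \<in> sets lebesgue" using \<Omega> by (simp add: borel_open)
  have lm: "\<Omega> \<in> lmeasurable" using \<Omega> by (simp add: lmeasurable_open)
  interpret finite_measure ?M by (rule finite_measure_lebesgue_on[OF lm])
  have sp: "space ?M = \<Omega>" by simp
  have em: "emeasure ?M (space ?M) = emeasure lebesgue \<Omega>"
    using \<Omega>s by (simp add: emeasure_restrict_space)
  have nn: "\<not> negligible \<Omega>" by (rule open_not_negligible[OF \<Omega>(1,3)])
  have pos: "emeasure ?M (space ?M) \<noteq> 0"
    using em nn \<Omega>s by (simp add: negligible_iff_emeasure0)
  have mpos: "0 < measure lebesgue \<Omega>"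
  proof -
    have "measure lebesgue \<Omega> \<noteq> 0" using nn lm by (simp add: negligible_iff_measure0)
    then show ?thesis using measure_nonneg[of lebesgue \<Omega>] by linarith
  qed
  note uD = Sigma_D[OF u] and vD = Sigma_D[OF v]
  obtain g1 where g1: "good_grad \<Omega> u g1" using uD(6) by blast
  obtain g2 where g2: "good_grad \<Omega> v g2" using vD(6) by blast
  have Npos: "0 < Nconst \<Omega> C \<delta>"
  proof -
    have "0 \<le> (\<integral>x. max (C x) 0 \<partial>?M)" by (rule integral_nonneg_AE) auto
    then show ?thesis using \<delta> by (simp add: Nconst_def add_pos_nonneg)
  qed
  have Ppos: "0 < Pconst \<Omega> C \<delta>"
  proof -
    have "0 \<le> (\<integral>x. - min (C x) 0 \<partial>?M)" by (rule integral_nonneg_AE) auto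
    then have "(\<integral>x. min (C x) 0 \<partial>?M) \<le> 0" by simp
    moreover have "0 < \<delta>\<^sup>2" using \<delta> by simp
    ultimately show ?thesis unfolding Pconst_def by linarith
  qed
  have iw: "integrable ?M w" unfolding w_def using uD(1) vD(1) by simp
  have w0: "(\<integral>x. w x \<partial>?M) = 0" unfolding w_def using uD(1,2) vD(1,2) by simp
  have ew2: "integrable ?M (\<lambda>x. exp (w x))" unfolding w_def
    by (rule lse(1)[OF uD(1) vD(1) uD(4) vD(4) t pos])
  have mw: "(\<lambda>x. exp (- w x)) = (\<lambda>x. exp (t * (- u x) + (1-t) * (- v x)))"
    by (simp add: w_def algebra_simps)
  have iu': "integrable ?M (\<lambda>x. - u x)" using uD(1) by simp
  have iv': "integrable ?M (\<lambda>x. - v x)" using vD(1) by simp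
  have ew1: "integrable ?M (\<lambda>x. exp (- w x))" unfolding mw
    by (rule lse(1)[OF iu' iv' _ _ t pos]) (use uD(3) vD(3) in simp_all)
  have cw: "integrable ?M (\<lambda>x. C x * w x)"
  proof -
    have "integrable ?M (\<lambda>x. t * (C x * u x) + (1-t) * (C x * v x))" using uD(5) vD(5) by simp
    then show ?thesis by (simp add: w_def algebra_simps)
  qed
  have gw: "good_grad \<Omega> w (\<lambda>x. t *\<^sub>R g1 x + (1-t) *\<^sub>R g2 x)"
    unfolding w_def by (rule wg_lin[OF \<Omega>(1,2) g1 g2 uD(1) vD(1)])
  have wS: "w \<in> Sigma_set \<Omega> C \<delta>" by (rule Sigma_I(1)[OF iw w0 ew1 ew2 cw gw])
  then show "(\<lambda>x. t * u x + (1-t) * v x) \<in> Sigma_set \<Omega> C \<delta>" by (simp add: w_def)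
  have gu: "grad_norm2_sq \<Omega> u = (\<integral>x. (norm (g1 x))\<^sup>2 \<partial>?M)" by (rule grad_norm_eq[OF \<Omega>(1,2) g1])
  have gv: "grad_norm2_sq \<Omega> v = (\<integral>x. (norm (g2 x))\<^sup>2 \<partial>?M)" by (rule grad_norm_eq[OF \<Omega>(1,2) g2])
  have gww: "grad_norm2_sq \<Omega> w = (\<integral>x. (norm (t *\<^sub>R g1 x + (1-t) *\<^sub>R g2 x))\<^sup>2 \<partial>?M)"
    by (rule grad_norm_eq[OF \<Omega>(1,2) gw])
  have n1: "integrable ?M (\<lambda>x. (norm (g1 x))\<^sup>2)" using g1 by (simp add: good_grad_def)
  have n2: "integrable ?M (\<lambda>x. (norm (g2 x))\<^sup>2)" using g2 by (simp add: good_grad_def)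
  have nw: "integrable ?M (\<lambda>x. (norm (t *\<^sub>R g1 x + (1-t) *\<^sub>R g2 x))\<^sup>2)" using gw by (simp add: good_grad_def)
  have "(\<integral>x. (norm (t *\<^sub>R g1 x + (1-t) *\<^sub>R g2 x))\<^sup>2 \<partial>?M)
      \<le> (\<integral>x. t * (norm (g1 x))\<^sup>2 + (1-t) * (norm (g2 x))\<^sup>2 \<partial>?M)"
  proof (rule integral_mono[OF nw])
    show "integrable ?M (\<lambda>x. t * (norm (g1 x))\<^sup>2 + (1-t) * (norm (g2 x))\<^sup>2)" using n1 n2 by simp
    fix x show "(norm (t *\<^sub>R g1 x + (1-t) *\<^sub>R g2 x))\<^sup>2 \<le> t * (norm (g1 x))\<^sup>2 + (1-t) * (norm (g2 x))\<^sup>2"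
      by (rule norm_sq_conv) (use t in auto)
  qed
  also have "\<dots> = t * (\<integral>x. (norm (g1 x))\<^sup>2 \<partial>?M) + (1-t) * (\<integral>x. (norm (g2 x))\<^sup>2 \<partial>?M)"
    using n1 n2 by simp
  finally have gineq: "grad_norm2_sq \<Omega> w \<le> t * grad_norm2_sq \<Omega> u + (1-t) * grad_norm2_sq \<Omega> v"
    using gu gv gww by simp
  have gineq2: "lam\<^sup>2 * grad_norm2_sq \<Omega> w \<le> t * (lam\<^sup>2 * grad_norm2_sq \<Omega> u) + (1-t) * (lam\<^sup>2 * grad_norm2_sq \<Omega> v)"
    using mult_left_mono[OF gineq, of "lam\<^sup>2"] by (simp add: algebra_simps)
  let ?m = "measure lebesgue \<Omega>"
  have L1: "ln ((\<integral>x. exp (- w x) \<partial>?M) / ?m)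
      \<le> t * ln ((\<integral>x. exp (- u x) \<partial>?M) / ?m) + (1-t) * ln ((\<integral>x. exp (- v x) \<partial>?M) / ?m)"
    unfolding mw using lse_div(1)[OF iu' iv' _ _ t pos mpos] uD(3) vD(3) by simp
  have L2: "ln ((\<integral>x. exp (w x) \<partial>?M) / ?m)
      \<le> t * ln ((\<integral>x. exp (u x) \<partial>?M) / ?m) + (1-t) * ln ((\<integral>x. exp (v x) \<partial>?M) / ?m)"
    unfolding w_def using lse_div(1)[OF uD(1) vD(1) uD(4) vD(4) t pos mpos] by simp
  have Cw: "(\<integral>x. C x * w x \<partial>?M) = t * (\<integral>x. C x * u x \<partial>?M) + (1-t) * (\<integral>x. C x * v x \<partial>?M)"
  proof -
    have "(\<integral>x. C x * w x \<partial>?M) = (\<integral>x. t * (C x * u x) + (1-t) * (C x * v x) \<partial>?M)"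
      by (simp add: w_def algebra_simps)
    also have "\<dots> = t * (\<integral>x. C x * u x \<partial>?M) + (1-t) * (\<integral>x. C x * v x \<partial>?M)"
      using uD(5) vD(5) by simp
    finally show ?thesis .
  qed
  define Nn where "Nn = Nconst \<Omega> C \<delta>"
  define Pp where "Pp = Pconst \<Omega> C \<delta>"
  have bw: "breal \<Omega> C \<delta> w = Nn * ln ((\<integral>x. exp (- w x) \<partial>?M) / ?m) + Pp * ln ((\<integral>x. exp (w x) \<partial>?M) / ?m)
      + (t * (\<integral>x. C x * u x \<partial>?M) + (1-t) * (\<integral>x. C x * v x \<partial>?M))"
    by (simp add: breal_def Nn_def Pp_def Cw)
  have bu: "breal \<Omega> C \<delta> u = Nn * ln ((\<integral>x. exp (- u x) \<partial>?M) / ?m) + Pp * ln ((\<integral>x. exp (u x) \<partial>?M) / ?m)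
      + (\<integral>x. C x * u x \<partial>?M)" by (simp add: breal_def Nn_def Pp_def)
  have bv: "breal \<Omega> C \<delta> v = Nn * ln ((\<integral>x. exp (- v x) \<partial>?M) / ?m) + Pp * ln ((\<integral>x. exp (v x) \<partial>?M) / ?m)
      + (\<integral>x. C x * v x \<partial>?M)" by (simp add: breal_def Nn_def Pp_def)
  have N1: "Nn * ln ((\<integral>x. exp (- w x) \<partial>?M) / ?m)
      \<le> t * (Nn * ln ((\<integral>x. exp (- u x) \<partial>?M) / ?m)) + (1-t) * (Nn * ln ((\<integral>x. exp (- v x) \<partial>?M) / ?m))"
    using mult_left_mono[OF L1, of Nn] Npos by (simp add: Nn_def algebra_simps)
  have P1: "Pp * ln ((\<integral>x. exp (w x) \<partial>?M) / ?m)
      \<le> t * (Pp * ln ((\<integral>x. exp (u x) \<partial>?M) / ?m)) + (1-t) * (Pp * ln ((\<integral>x. exp (v x) \<partial>?M) / ?m))"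
    using mult_left_mono[OF L2, of Pp] Ppos by (simp add: Pp_def algebra_simps)
  have expand: "t * (lam\<^sup>2 * grad_norm2_sq \<Omega> u + breal \<Omega> C \<delta> u) + (1-t) * (lam\<^sup>2 * grad_norm2_sq \<Omega> v + breal \<Omega> C \<delta> v)
    = (t * (lam\<^sup>2 * grad_norm2_sq \<Omega> u) + (1-t) * (lam\<^sup>2 * grad_norm2_sq \<Omega> v))
      + (t * (Nn * ln ((\<integral>x. exp (- u x) \<partial>?M) / ?m)) + (1-t) * (Nn * ln ((\<integral>x. exp (- v x) \<partial>?M) / ?m)))
      + (t * (Pp * ln ((\<integral>x. exp (u x) \<partial>?M) / ?m)) + (1-t) * (Pp * ln ((\<integral>x. exp (v x) \<partial>?M) / ?m)))
      + (t * (\<integral>x. C x * u x \<partial>?M) + (1-t) * (\<integral>x. C x * v x \<partial>?M))"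
    unfolding bu bv by (simp add: algebra_simps)
  have lhs: "lam\<^sup>2 * grad_norm2_sq \<Omega> w + breal \<Omega> C \<delta> w
    = lam\<^sup>2 * grad_norm2_sq \<Omega> w + Nn * ln ((\<integral>x. exp (- w x) \<partial>?M) / ?m) + Pp * ln ((\<integral>x. exp (w x) \<partial>?M) / ?m)
      + (t * (\<integral>x. C x * u x \<partial>?M) + (1-t) * (\<integral>x. C x * v x \<partial>?M))"
    unfolding bw by simp
  show "lam\<^sup>2 * grad_norm2_sq \<Omega> (\<lambda>x. t * u x + (1-t) * v x) + breal \<Omega> C \<delta> (\<lambda>x. t * u x + (1-t) * v x)
         \<le> t * (lam\<^sup>2 * grad_norm2_sq \<Omega> u + breal \<Omega> C \<delta> u) + (1-t) * (lam\<^sup>2 * grad_norm2_sq \<Omega> v + breal \<Omega> C \<delta> v)"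
    unfolding w_def[symmetric] expand lhs using gineq2 N1 P1 by linarith
  assume nae: "\<not> (AE x in lebesgue_on \<Omega>. u x = v x)"
  have L2s: "ln ((\<integral>x. exp (w x) \<partial>?M) / ?m)
      < t * ln ((\<integral>x. exp (u x) \<partial>?M) / ?m) + (1-t) * ln ((\<integral>x. exp (v x) \<partial>?M) / ?m)"
    unfolding w_def using lse_div(2)[OF uD(1) vD(1) uD(4) vD(4) t pos mpos] uD(2) vD(2) nae by simp
  have P2: "Pp * ln ((\<integral>x. exp (w x) \<partial>?M) / ?m)
      < t * (Pp * ln ((\<integral>x. exp (u x) \<partial>?M) / ?m)) + (1-t) * (Pp * ln ((\<integral>x. exp (v x) \<partial>?M) / ?m))"
    using mult_strict_left_mono[OF L2s, of Pp] Ppos by (simp add: Pp_def algebra_simps)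
  show "lam\<^sup>2 * grad_norm2_sq \<Omega> (\<lambda>x. t * u x + (1-t) * v x) + breal \<Omega> C \<delta> (\<lambda>x. t * u x + (1-t) * v x)
         < t * (lam\<^sup>2 * grad_norm2_sq \<Omega> u + breal \<Omega> C \<delta> u) + (1-t) * (lam\<^sup>2 * grad_norm2_sq \<Omega> v + breal \<Omega> C \<delta> v)"
    unfolding w_def[symmetric] expand lhs using gineq2 N1 P2 by linarith
qed

lemma ereal_pos_mult_not_minf: "0 < a \<Longrightarrow> x \<noteq> -\<infinity> \<Longrightarrow> ereal a * x \<noteq> -\<infinity>"
  by (cases x) auto

lemma bbar_not_minf: "bbar \<Omega> C \<delta> lam u \<noteq> -\<infinity>"
  by (simp add: bbar_def bfun_def)

lemma rhs_inf:
  assumes "0 < t" "t < 1" "bbar \<Omega> C \<delta> lam u = \<infinity> \<or> bbar \<Omega> C \<delta> lam v = \<infinity>"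
  shows "ereal t * bbar \<Omega> C \<delta> lam u + ereal (1-t) * bbar \<Omega> C \<delta> lam v = \<infinity>"
proof -
  have a: "ereal t * bbar \<Omega> C \<delta> lam u \<noteq> -\<infinity>"
    using assms by (intro ereal_pos_mult_not_minf bbar_not_minf) auto
  have b: "ereal (1-t) * bbar \<Omega> C \<delta> lam v \<noteq> -\<infinity>"
    using assms by (intro ereal_pos_mult_not_minf bbar_not_minf) auto
  from assms(3) show ?thesis
  proof
    assume "bbar \<Omega> C \<delta> lam u = \<infinity>"
    then have "ereal t * bbar \<Omega> C \<delta> lam u = \<infinity>" using assms(1) by simp
    then show ?thesis using b by simp
  next
    assume "bbar \<Omega> C \<delta> lam v = \<infinity>"
    then have "ereal (1-t) * bbar \<Omega> C \<delta> lam v = \<infinity>" using assms(2) by simp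
    then show ?thesis using a by simp
  qed
qed

theorem lemma2p5:
  fixes \<Omega> :: "(real ^ 'n) set" and C :: "real ^ 'n \<Rightarrow> real" and \<delta> lam :: real
  assumes "CARD('n) \<in> {1, 2, 3}"
    and "lipschitz_domain \<Omega>"
    and "in_H1 \<Omega> C"
    and "\<delta> > 0"
    and "lam \<ge> 0"
  shows "strictly_convex_L1 \<Omega> (bbar \<Omega> C \<delta> lam)"
proof -
  have \<Omega>: "open \<Omega>" "bounded \<Omega>" "\<Omega> \<noteq> {}" using assms(2) by (auto simp: lipschitz_domain_def)
  note \<delta> = assms(4) and lam = assms(5)
  have inS: "u \<in> Sigma_set \<Omega> C \<delta>" if "bbar \<Omega> C \<delta> lam u \<noteq> \<infinity>" for u
    using that by (auto simp: bbar_def split: if_splits)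
  have val: "bbar \<Omega> C \<delta> lam (\<lambda>x. t * u x + (1 - t) * v x)
        = ereal (lam\<^sup>2 * grad_norm2_sq \<Omega> (\<lambda>x. t * u x + (1-t) * v x) + breal \<Omega> C \<delta> (\<lambda>x. t * u x + (1-t) * v x))"
    "ereal t * bbar \<Omega> C \<delta> lam u + ereal (1 - t) * bbar \<Omega> C \<delta> lam v
        = ereal (t * (lam\<^sup>2 * grad_norm2_sq \<Omega> u + breal \<Omega> C \<delta> u) + (1-t) * (lam\<^sup>2 * grad_norm2_sq \<Omega> v + breal \<Omega> C \<delta> v))"
    if u: "u \<in> Sigma_set \<Omega> C \<delta>" and v: "v \<in> Sigma_set \<Omega> C \<delta>" and t: "0 < t" "t < 1" for u v and t :: real
  proof -
    show "bbar \<Omega> C \<delta> lam (\<lambda>x. t * u x + (1 - t) * v x)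
        = ereal (lam\<^sup>2 * grad_norm2_sq \<Omega> (\<lambda>x. t * u x + (1-t) * v x) + breal \<Omega> C \<delta> (\<lambda>x. t * u x + (1-t) * v x))"
      by (rule bbar_Sigma[OF core(1)[OF \<Omega> \<delta> lam u v t]])
    show "ereal t * bbar \<Omega> C \<delta> lam u + ereal (1 - t) * bbar \<Omega> C \<delta> lam v
        = ereal (t * (lam\<^sup>2 * grad_norm2_sq \<Omega> u + breal \<Omega> C \<delta> u) + (1-t) * (lam\<^sup>2 * grad_norm2_sq \<Omega> v + breal \<Omega> C \<delta> v))"
      by (simp add: bbar_Sigma[OF u] bbar_Sigma[OF v])
  qed
  show ?thesis unfolding strictly_convex_L1_def
  proof (intro conjI allI impI)
    fix u v and t :: real assume H: "in_L1 \<Omega> u \<and> in_L1 \<Omega> v \<and> 0 < t \<and> t < 1"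
    then have t: "0 < t" "t < 1" by auto
    show "bbar \<Omega> C \<delta> lam (\<lambda>x. t * u x + (1 - t) * v x)
        \<le> ereal t * bbar \<Omega> C \<delta> lam u + ereal (1 - t) * bbar \<Omega> C \<delta> lam v"
    proof (cases "bbar \<Omega> C \<delta> lam u = \<infinity> \<or> bbar \<Omega> C \<delta> lam v = \<infinity>")
      case True
      have "ereal t * bbar \<Omega> C \<delta> lam u + ereal (1 - t) * bbar \<Omega> C \<delta> lam v = \<infinity>"
        by (rule rhs_inf[OF t True])
      then show ?thesis by (simp only:) (rule ereal_less_eq(1))
    next
      case False
      then have u: "u \<in> Sigma_set \<Omega> C \<delta>" and v: "v \<in> Sigma_set \<Omega> C \<delta>" using inS by auto
      show ?thesis unfolding val[OF u v t] using core(2)[OF \<Omega> \<delta> lam u v t] by simp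
    qed
  next
    fix u v and t :: real assume H: "in_L1 \<Omega> u \<and> in_L1 \<Omega> v \<and> 0 < t \<and> t < 1 \<and>
        \<not> (AE x in lebesgue_on \<Omega>. u x = v x) \<and> bbar \<Omega> C \<delta> lam u < \<infinity> \<and> bbar \<Omega> C \<delta> lam v < \<infinity>"
    then have t: "0 < t" "t < 1" and nae: "\<not> (AE x in lebesgue_on \<Omega>. u x = v x)" by auto
    have u: "u \<in> Sigma_set \<Omega> C \<delta>" and v: "v \<in> Sigma_set \<Omega> C \<delta>" using inS H by auto
    show "bbar \<Omega> C \<delta> lam (\<lambda>x. t * u x + (1 - t) * v x)
        < ereal t * bbar \<Omega> C \<delta> lam u + ereal (1 - t) * bbar \<Omega> C \<delta> lam v"
      unfolding val[OF u v t] using core(3)[OF \<Omega> \<delta> lam u v t nae] by simp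
  qed
qed


end
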